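(* Let $M'=M[D,K]$ be a compatible minor of the weighted uncertainty matroid $\mathcal{M}$ such that $M'$ contains no element $e$ with $w_e=U_e$ or $w_e=L_e$, and let $B$ be any minimum-weight basis of $M'$. Then $M[D',K']$ with $K'=K\cup B$ and $D'=D\cup(E(M')\setminus B)$ is a compatible minor of $\mathcal{M}$.
   Context: A weighted uncertainty matroid $\mathcal{M}=(E,\mathcal{I},A,w)$ consists of a matroid $M=(E,\mathcal{I})$ on a finite set $E$, for each $e\in E$ a non-empty finite union $A_e$ of bounded real intervals (each open or closed), a weight $w_e\in A_e$, and a query cost $c_e\ge0$. $L_e=\inf A_e$, $U_e=\sup A_e$. A minimum-weight basis (MWB) is a basis minimizing total weight. A weight assignment is $w^*$ with $w^*_e\in A_e$, consistent with $Q$ if $w^*_e=w_e$ on $Q$. $Q$ verifies an MWB $B$ if for every weight assignment consistent with $Q$, $B$ is an MWB with respect to it; a certificate for $\mathcal{M}$ is a set verifying some MWB, and $c^*$ is the minimum cost $\sum_{e\in Q}c_e$ of a certificate for $\mathcal{M}$. For $D,K\subseteq E$, $M[D,K]$ is the matroid obtained from $M$ by deleting $D$ and contracting $K$, ground set $E(M[D,K])=E\setminus(D\cup K)$, weights restricted. $M[D,K]$ is a compatible minor if there is a set $Q$ of cost $c^*$ verifying an MWB $B$ of $\mathcal{M}$ with $K\subseteq B$ and $D\cap B=\emptyset$. *)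

theory Defs
  imports Complex_Main
begin

definition matroid :: "'a set \<Rightarrow> ('a set \<Rightarrow> bool) \<Rightarrow> bool" where
  "matroid E indep \<longleftrightarrow>
     finite E \<and> indep {} \<and>
     (\<forall>X. indep X \<longrightarrow> X \<subseteq> E) \<and>
     (\<forall>X Y. indep Y \<and> X \<subseteq> Y \<longrightarrow> indep X) \<and>
     (\<forall>X Y. indep X \<and> indep Y \<and> card X < card Y \<longrightarrow> (\<exists>y\<in>Y - X. indep (insert y X)))"

definition basis :: "('a set \<Rightarrow> bool) \<Rightarrow> 'a set \<Rightarrow> bool" where
  "basis indep B \<longleftrightarrow> indep B \<and> (\<forall>X. indep X \<and> B \<subseteq> X \<longrightarrow> X = B)"

definition mwb :: "('a set \<Rightarrow> bool) \<Rightarrow> ('a \<Rightarrow> real) \<Rightarrow> 'a set \<Rightarrow> bool" where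
  "mwb indep w B \<longleftrightarrow> basis indep B \<and> (\<forall>B'. basis indep B' \<longrightarrow> sum w B \<le> sum w B')"

text \<open>Minor M[D,K]: delete D, contract K. A set I is independent in M[D,K] iff
  I avoids D \<union> K and I \<union> J is independent for some maximal independent subset J of K.\<close>
definition minor_indep :: "'a set \<Rightarrow> ('a set \<Rightarrow> bool) \<Rightarrow> 'a set \<Rightarrow> 'a set \<Rightarrow> 'a set \<Rightarrow> bool" where
  "minor_indep E indep D K I \<longleftrightarrow>
     I \<subseteq> E - (D \<union> K) \<and>
     (\<exists>J. J \<subseteq> K \<and> indep J \<and> (\<forall>J'. J \<subseteq> J' \<and> J' \<subseteq> K \<and> indep J' \<longrightarrow> J' = J) \<and> indep (I \<union> J))"

definition oc_interval :: "real set \<Rightarrow> bool" where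
  "oc_interval I \<longleftrightarrow> (\<exists>a b. I = {a..b} \<or> I = {a<..<b})"

definition uncertainty_area :: "real set \<Rightarrow> bool" where
  "uncertainty_area S \<longleftrightarrow> S \<noteq> {} \<and> (\<exists>\<I>. finite \<I> \<and> (\<forall>I\<in>\<I>. oc_interval I) \<and> S = \<Union>\<I>)"

definition uncertainty_matroid ::
  "'a set \<Rightarrow> ('a set \<Rightarrow> bool) \<Rightarrow> ('a \<Rightarrow> real set) \<Rightarrow> ('a \<Rightarrow> real) \<Rightarrow> ('a \<Rightarrow> real) \<Rightarrow> bool" where
  "uncertainty_matroid E indep A w c \<longleftrightarrow>
     matroid E indep \<and> (\<forall>e\<in>E. uncertainty_area (A e) \<and> w e \<in> A e \<and> c e \<ge> 0)"

definition lowerL :: "('a \<Rightarrow> real set) \<Rightarrow> 'a \<Rightarrow> real" where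
  "lowerL A e = Inf (A e)"

definition upperU :: "('a \<Rightarrow> real set) \<Rightarrow> 'a \<Rightarrow> real" where
  "upperU A e = Sup (A e)"

definition weight_assignment :: "'a set \<Rightarrow> ('a \<Rightarrow> real set) \<Rightarrow> ('a \<Rightarrow> real) \<Rightarrow> bool" where
  "weight_assignment E A w' \<longleftrightarrow> (\<forall>e\<in>E. w' e \<in> A e)"

definition consistent :: "('a \<Rightarrow> real) \<Rightarrow> 'a set \<Rightarrow> ('a \<Rightarrow> real) \<Rightarrow> bool" where
  "consistent w Q w' \<longleftrightarrow> (\<forall>e\<in>Q. w' e = w e)"

definition verifies ::
  "'a set \<Rightarrow> ('a set \<Rightarrow> bool) \<Rightarrow> ('a \<Rightarrow> real set) \<Rightarrow> ('a \<Rightarrow> real) \<Rightarrow> 'a set \<Rightarrow> 'a set \<Rightarrow> bool" where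
  "verifies E indep A w Q B \<longleftrightarrow>
     (\<forall>w'. weight_assignment E A w' \<and> consistent w Q w' \<longrightarrow> mwb indep w' B)"

definition certificate ::
  "'a set \<Rightarrow> ('a set \<Rightarrow> bool) \<Rightarrow> ('a \<Rightarrow> real set) \<Rightarrow> ('a \<Rightarrow> real) \<Rightarrow> 'a set \<Rightarrow> bool" where
  "certificate E indep A w Q \<longleftrightarrow> Q \<subseteq> E \<and> (\<exists>B. verifies E indep A w Q B)"

definition opt_cost ::
  "'a set \<Rightarrow> ('a set \<Rightarrow> bool) \<Rightarrow> ('a \<Rightarrow> real set) \<Rightarrow> ('a \<Rightarrow> real) \<Rightarrow> ('a \<Rightarrow> real) \<Rightarrow> real" where
  "opt_cost E indep A w c = Min (sum c ` {Q. certificate E indep A w Q})"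

definition compatible_minor ::
  "'a set \<Rightarrow> ('a set \<Rightarrow> bool) \<Rightarrow> ('a \<Rightarrow> real set) \<Rightarrow> ('a \<Rightarrow> real) \<Rightarrow> ('a \<Rightarrow> real)
   \<Rightarrow> 'a set \<Rightarrow> 'a set \<Rightarrow> bool" where
  "compatible_minor E indep A w c D K \<longleftrightarrow>
     D \<subseteq> E \<and> K \<subseteq> E \<and>
     (\<exists>Q B. Q \<subseteq> E \<and> sum c Q = opt_cost E indep A w c \<and> verifies E indep A w Q B \<and>
            mwb indep w B \<and> K \<subseteq> B \<and> D \<inter> B = {})"

end

theory Submission
  imports Defs
begin

lemma oc_bdd: "oc_interval I \<Longrightarrow> bdd_below I \<and> bdd_above I"
  unfolding oc_interval_def by auto

lemma area_bdd:
  assumes "uncertainty_area S" shows "bdd_below S" "bdd_above S"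
proof -
  obtain \<I> where f: "finite \<I>" "\<forall>I\<in>\<I>. oc_interval I" "S = \<Union>\<I>"
    using assms unfolding uncertainty_area_def by blast
  have "bdd_below (\<Union>I\<in>\<I>. id I)" "bdd_above (\<Union>I\<in>\<I>. id I)"
    using f oc_bdd bdd_below_UN[OF f(1), of id] bdd_above_UN[OF f(1), of id] by auto
  then show "bdd_below S" "bdd_above S" using f by auto
qed

lemma exists_below:
  assumes "uncertainty_area S" "x \<in> S" "x \<noteq> Inf S"
  shows "\<exists>v\<in>S. v < x"
proof -
  have b: "bdd_below S" using area_bdd(1)[OF assms(1)] .
  have "Inf S \<le> x" using cInf_lower[OF assms(2) b] .
  then have "Inf S < x" using assms by simp
  then show ?thesis using cInf_less_iff[of S x] b assms(2) by blast
qed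

lemma exists_above:
  assumes "uncertainty_area S" "x \<in> S" "x \<noteq> Sup S"
  shows "\<exists>v\<in>S. v > x"
proof -
  have b: "bdd_above S" using area_bdd(2)[OF assms(1)] .
  have "x \<le> Sup S" using cSup_upper[OF assms(2) b] .
  then have "x < Sup S" using assms by simp
  then show ?thesis using less_cSup_iff[of S x] b assms(2) by blast
qed

lemma sum_transfer:
  fixes w w' :: "'a \<Rightarrow> real"
  assumes "finite S" "finite T" "S - T \<subseteq> Q" "T - S \<subseteq> Q" "\<forall>e\<in>Q. w' e = w e"
    "sum w S = sum w T"
  shows "sum w' S = sum w' T"
proof -
  have s1: "sum w S = sum w (S \<inter> T) + sum w (S - T)" using sum.Int_Diff assms(1) by blast
  have s2: "sum w T = sum w (S \<inter> T) + sum w (T - S)"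
    using sum.Int_Diff[OF assms(2), of w S] by (simp add: Int_commute)
  have s3: "sum w' S = sum w' (S \<inter> T) + sum w' (S - T)" using sum.Int_Diff assms(1) by blast
  have s4: "sum w' T = sum w' (S \<inter> T) + sum w' (T - S)"
    using sum.Int_Diff[OF assms(2), of w' S] by (simp add: Int_commute)
  have "sum w' (S - T) = sum w (S - T)" using assms(3,5) by (intro sum.cong) auto
  moreover have "sum w' (T - S) = sum w (T - S)" using assms(4,5) by (intro sum.cong) auto
  ultimately show ?thesis using s1 s2 s3 s4 assms(6) by linarith
qed

lemma sum_upd:
  fixes w :: "'a \<Rightarrow> real"
  assumes "finite S" "f \<in> S"
  shows "sum (w(f := v)) S = sum w S - w f + v"
proof -
  have "sum (w(f := v)) S = (w(f := v)) f + sum (w(f := v)) (S - {f})" by (rule sum.remove[OF assms])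
  then have "sum (w(f := v)) S = v + sum (w(f := v)) (S - {f})" by simp
  moreover have "sum (w(f := v)) (S - {f}) = sum w (S - {f})" by (intro sum.cong) auto
  moreover have "sum w S = w f + sum w (S - {f})" using sum.remove[OF assms] by simp
  ultimately show ?thesis by linarith
qed

theorem lemma24:
  fixes E D K B :: "'a set" and indep :: "'a set \<Rightarrow> bool"
    and A :: "'a \<Rightarrow> real set" and w c :: "'a \<Rightarrow> real"
  assumes "uncertainty_matroid E indep A w c"
    and "compatible_minor E indep A w c D K"
    and "\<forall>e \<in> E - (D \<union> K). w e \<noteq> upperU A e \<and> w e \<noteq> lowerL A e"
    and "mwb (minor_indep E indep D K) w B"
  shows "compatible_minor E indep A w c (D \<union> ((E - (D \<union> K)) - B)) (K \<union> B)"
proof -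
  have M: "matroid E indep" and Aw: "\<forall>e\<in>E. uncertainty_area (A e) \<and> w e \<in> A e"
    using assms(1) unfolding uncertainty_matroid_def by auto
  have finE: "finite E" and sub: "\<And>X. indep X \<Longrightarrow> X \<subseteq> E"
    and down: "\<And>X Y. indep Y \<Longrightarrow> X \<subseteq> Y \<Longrightarrow> indep X"
    and aug: "\<And>X Y. indep X \<Longrightarrow> indep Y \<Longrightarrow> card X < card Y \<Longrightarrow> \<exists>y\<in>Y - X. indep (insert y X)"
    using M unfolding matroid_def by blast+
  obtain Q B0 where DE: "D \<subseteq> E" and KE: "K \<subseteq> E" and QE: "Q \<subseteq> E"
    and Qc: "sum c Q = opt_cost E indep A w c" and ver: "verifies E indep A w Q B0"
    and mB0: "mwb indep w B0" and KB0: "K \<subseteq> B0" and DB0: "D \<inter> B0 = {}"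
    using assms(2) unfolding compatible_minor_def by blast
  have bB0: "basis indep B0" using mB0 unfolding mwb_def by blast
  have iB0: "indep B0" using bB0 unfolding basis_def by blast
  have B0E: "B0 \<subseteq> E" using sub iB0 .
  have iK: "indep K" using down iB0 KB0 by blast
  have mi: "minor_indep E indep D K I \<longleftrightarrow> I \<subseteq> E - (D \<union> K) \<and> indep (I \<union> K)" for I
  proof
    assume "minor_indep E indep D K I"
    then obtain J where J: "I \<subseteq> E - (D \<union> K)" "J \<subseteq> K" "indep J"
      "\<forall>J'. J \<subseteq> J' \<and> J' \<subseteq> K \<and> indep J' \<longrightarrow> J' = J" "indep (I \<union> J)"
      unfolding minor_indep_def by blast
    then have "J = K" using iK by blast
    then show "I \<subseteq> E - (D \<union> K) \<and> indep (I \<union> K)" using J by blast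
  next
    assume "I \<subseteq> E - (D \<union> K) \<and> indep (I \<union> K)"
    then show "minor_indep E indep D K I" unfolding minor_indep_def
      using iK by (intro conjI exI[of _ K]) auto
  qed
  have bB: "basis (minor_indep E indep D K) B" and Bmin:
    "\<forall>B'. basis (minor_indep E indep D K) B' \<longrightarrow> sum w B \<le> sum w B'"
    using assms(4) unfolding mwb_def by blast+
  have BE: "B \<subseteq> E - (D \<union> K)" and iKB: "indep (K \<union> B)"
    using bB mi unfolding basis_def by (auto simp: Un_commute)
  have Bmax: "\<And>X. X \<subseteq> E - (D \<union> K) \<Longrightarrow> indep (X \<union> K) \<Longrightarrow> B \<subseteq> X \<Longrightarrow> X = B"
    using bB mi unfolding basis_def by blast
  have finB0: "finite B0" using B0E finE finite_subset by blast
  have finKB: "finite (K \<union> B)" using KE BE finE finite_subset by blast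
  have cardge: "card B0 \<le> card (K \<union> B)"
  proof (rule ccontr)
    assume "\<not> ?thesis"
    then obtain y where y: "y \<in> B0 - (K \<union> B)" "indep (insert y (K \<union> B))"
      using aug[OF iKB iB0] by force
    have "insert y B \<subseteq> E - (D \<union> K)" using y BE B0E DB0 by auto
    moreover have "indep (insert y B \<union> K)" using y(2) by (simp add: Un_commute)
    ultimately have "insert y B = B" using Bmax by blast
    then show False using y by blast
  qed
  have bKB: "basis indep (K \<union> B)"
    unfolding basis_def
  proof (intro conjI allI impI iKB)
    fix X assume X: "indep X \<and> K \<union> B \<subseteq> X"
    show "X = K \<union> B"
    proof (rule ccontr)
      assume "X \<noteq> K \<union> B"
      then have "K \<union> B \<subset> X" using X by blast
      moreover have "finite X" using X sub finE finite_subset by blast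
      ultimately have "card (K \<union> B) < card X" by (simp add: psubset_card_mono)
      then have "card B0 < card X" using cardge by linarith
      then obtain y where y: "y \<in> X - B0" "indep (insert y B0)" using aug[OF iB0] X by blast
      then have "insert y B0 = B0" using bB0 unfolding basis_def by blast
      then show False using y by blast
    qed
  qed
  have bB0K: "basis (minor_indep E indep D K) (B0 - K)"
    unfolding basis_def
  proof (intro conjI allI impI)
    show "minor_indep E indep D K (B0 - K)" using mi B0E DB0 KB0 iB0
      by (simp add: Un_absorb2) blast
  next
    fix X assume X: "minor_indep E indep D K X \<and> B0 - K \<subseteq> X"
    then have X1: "X \<subseteq> E - (D \<union> K)" "indep (X \<union> K)" using mi by auto
    have "B0 \<subseteq> X \<union> K" using X by blast
    then have "X \<union> K = B0" using bB0 X1 unfolding basis_def by blast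
    then show "X = B0 - K" using X1 by blast
  qed
  have "sum w B \<le> sum w (B0 - K)" using Bmin bB0K by blast
  moreover have "sum w (K \<union> B) = sum w K + sum w B"
    using BE KE finE finite_subset by (intro sum.union_disjoint) auto
  moreover have "sum w B0 = sum w K + sum w (B0 - K)"
    using sum.subset_diff[OF KB0 finB0, of w] by linarith
  moreover have "sum w B0 \<le> sum w (K \<union> B)" using mB0 bKB unfolding mwb_def by blast
  ultimately have eqw: "sum w (K \<union> B) = sum w B0" by linarith
  have mKB: "mwb indep w (K \<union> B)"
    unfolding mwb_def using bKB eqw mB0 unfolding mwb_def by auto
  have wa: "weight_assignment E A (w(e := v))" if "e \<in> E" "v \<in> A e" for e v
    using Aw that unfolding weight_assignment_def by auto
  have co: "consistent w Q (w(e := v))" if "e \<notin> Q" for e v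
    using that unfolding consistent_def by auto
  have d1: "(K \<union> B) - B0 \<subseteq> Q"
  proof
    fix f assume f: "f \<in> (K \<union> B) - B0"
    show "f \<in> Q"
    proof (rule ccontr)
      assume fQ: "f \<notin> Q"
      have fE: "f \<in> E - (D \<union> K)" using f BE KB0 by blast
      then obtain v where v: "v \<in> A f" "v < w f"
        using exists_below[of "A f" "w f"] Aw assms(3) unfolding lowerL_def by blast
      have "mwb indep (w(f := v)) B0" using ver wa[of f v] co[OF fQ, of v] fE v
        unfolding verifies_def by blast
      then have le: "sum (w(f := v)) B0 \<le> sum (w(f := v)) (K \<union> B)"
        using bKB unfolding mwb_def by blast
      have "sum (w(f := v)) B0 = sum w B0" using f by (intro sum.cong) auto
      moreover have "sum (w(f := v)) (K \<union> B) = sum w (K \<union> B) - w f + v"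
        using f sum_upd[OF finKB, of f w v] by blast
      ultimately show False using le eqw v by linarith
    qed
  qed
  have d2: "B0 - (K \<union> B) \<subseteq> Q"
  proof
    fix g assume g: "g \<in> B0 - (K \<union> B)"
    show "g \<in> Q"
    proof (rule ccontr)
      assume gQ: "g \<notin> Q"
      have gE: "g \<in> E - (D \<union> K)" using g B0E DB0 by blast
      then obtain v where v: "v \<in> A g" "v > w g"
        using exists_above[of "A g" "w g"] Aw assms(3) unfolding upperU_def by blast
      have "mwb indep (w(g := v)) B0" using ver wa[of g v] co[OF gQ, of v] gE v
        unfolding verifies_def by blast
      then have le: "sum (w(g := v)) B0 \<le> sum (w(g := v)) (K \<union> B)"
        using bKB unfolding mwb_def by blast
      have "sum (w(g := v)) (K \<union> B) = sum w (K \<union> B)" using g by (intro sum.cong) auto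
      moreover have "sum (w(g := v)) B0 = sum w B0 - w g + v"
        using g sum_upd[OF finB0, of g w v] by blast
      ultimately show False using le eqw v by linarith
    qed
  qed
  have verKB: "verifies E indep A w Q (K \<union> B)"
    unfolding verifies_def
  proof (intro allI impI)
    fix w' assume w': "weight_assignment E A w' \<and> consistent w Q w'"
    then have m0: "mwb indep w' B0" using ver unfolding verifies_def by blast
    have "sum w' (K \<union> B) = sum w' B0"
      using sum_transfer[OF finKB finB0 d1 d2 _ eqw] w' unfolding consistent_def by blast
    then show "mwb indep w' (K \<union> B)" using m0 bKB unfolding mwb_def by auto
  qed
  show ?thesis unfolding compatible_minor_def
    using DE KE BE QE Qc verKB mKB DB0 KB0
    by (intro conjI exI[of _ Q] exI[of _ "K \<union> B"]) auto
qed

end
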